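(* Let $n\ge3$ and let $\overrightarrow{C_n}$ be $\Theta$-oriented. For a distance set $D\subseteq\{0,1,\dots,n-2\}$ of $\overrightarrow{C_n}$, $\overrightarrow{C_n}$ is $D$-antimagic if and only if $\min(D)\le1$.
   Context: An oriented graph is a simple graph each of whose edges is given one direction (an arc $(u,v)$ goes from $u$ to $v$). For vertices $u,v$, $d(u,v)$ is the length of a shortest directed path from $u$ to $v$ ($d(u,u)=0$, $\infty$ if no path). A distance set of an oriented graph is a nonempty set $D$ of nonnegative integers each of which is a finite distance $d(u,v)$ for some pair of vertices. $N_D(v)=\{y : d(v,y)\in D\}$; for a bijection $f:V\to\{1,\dots,|V|\}$, $\omega_D(v)=\sum_{x\in N_D(v)}f(x)$ (empty sum $0$); $f$ is $D$-antimagic if distinct vertices have distinct $D$-weights, and the graph is $D$-antimagic if such an $f$ exists. A $\Theta$-oriented cycle $\overrightarrow{C_n}$ is an orientation of the $n$-cycle with exactly one source (in-degree $0$) and exactly one sink (out-degree $0$), which are adjacent; up to relabeling, its vertices are $v_1,\dots,v_n$ and its arcs are $(v_i,v_{i+1})$, $1\le i\le n-1$, and $(v_1,v_n)$. Its diameter is $n-2$. *)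

theory Defs
  imports Main
begin

text \<open>A digraph is given by a vertex set V and an arc relation A (pairs (u,v) = arc from u to v).
  A walk of length k from u to v exists iff (u,v) is in A ^^ k.\<close>

definition has_dist :: "('a \<times> 'a) set \<Rightarrow> 'a \<Rightarrow> 'a \<Rightarrow> nat \<Rightarrow> bool" where
  "has_dist A u v k \<longleftrightarrow> (u, v) \<in> A ^^ k \<and> (\<forall>j<k. (u, v) \<notin> A ^^ j)"

definition is_distance_set :: "'a set \<Rightarrow> ('a \<times> 'a) set \<Rightarrow> nat set \<Rightarrow> bool" where
  "is_distance_set V A D \<longleftrightarrow> D \<noteq> {} \<and> (\<forall>k\<in>D. \<exists>u\<in>V. \<exists>v\<in>V. has_dist A u v k)"

definition N_D :: "'a set \<Rightarrow> ('a \<times> 'a) set \<Rightarrow> nat set \<Rightarrow> 'a \<Rightarrow> 'a set" where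
  "N_D V A D v = {y \<in> V. \<exists>k\<in>D. has_dist A v y k}"

definition D_weight :: "'a set \<Rightarrow> ('a \<times> 'a) set \<Rightarrow> nat set \<Rightarrow> ('a \<Rightarrow> nat) \<Rightarrow> 'a \<Rightarrow> nat" where
  "D_weight V A D f v = (\<Sum>x\<in>N_D V A D v. f x)"

definition D_antimagic_labeling :: "'a set \<Rightarrow> ('a \<times> 'a) set \<Rightarrow> nat set \<Rightarrow> ('a \<Rightarrow> nat) \<Rightarrow> bool" where
  "D_antimagic_labeling V A D f \<longleftrightarrow>
     bij_betw f V {1..card V} \<and> inj_on (D_weight V A D f) V"

definition D_antimagic :: "'a set \<Rightarrow> ('a \<times> 'a) set \<Rightarrow> nat set \<Rightarrow> bool" where
  "D_antimagic V A D \<longleftrightarrow> (\<exists>f. D_antimagic_labeling V A D f)"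

definition theta_vertices :: "nat \<Rightarrow> nat set" where
  "theta_vertices n = {1..n}"

definition theta_arcs :: "nat \<Rightarrow> (nat \<times> nat) set" where
  "theta_arcs n = {(i, i + 1) | i. 1 \<le> i \<and> i \<le> n - 1} \<union> {(1, n)}"

end

theory Submission
  imports Defs
begin

lemma arc_iff: "(w,v) \<in> theta_arcs n \<longleftrightarrow> (v = w+1 \<and> 1 \<le> w \<and> w \<le> n - 1) \<or> (w = 1 \<and> v = n)"
  unfolding theta_arcs_def by auto

lemma step_arith:
  assumes "n \<ge> 3" "1 \<le> (u::nat)"
  shows "(\<exists>w. ((w = u+k \<and> u+k \<le> n) \<or> (k=1 \<and> u=1 \<and> w=n)) \<and> ((v = w+1 \<and> 1 \<le> w \<and> w \<le> n - 1) \<or> (w = 1 \<and> v = n)))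
     \<longleftrightarrow> (v = u+Suc k \<and> u+Suc k \<le> n) \<or> (Suc k=1 \<and> u=1 \<and> v=n)" (is "?L \<longleftrightarrow> ?R")
proof
  assume ?L
  then obtain w where P: "(w = u+k \<and> u+k \<le> n) \<or> (k=1 \<and> u=1 \<and> w=n)"
    and Q: "(v = w+1 \<and> 1 \<le> w \<and> w \<le> n - 1) \<or> (w = 1 \<and> v = n)" by blast
  from P show ?R
  proof
    assume a: "w = u+k \<and> u+k \<le> n"
    from Q show ?R
    proof
      assume "v = w+1 \<and> 1 \<le> w \<and> w \<le> n - 1" then show ?R using a assms by linarith
    next
      assume "w = 1 \<and> v = n" then show ?R using a assms by simp
    qed
  next
    assume a: "k=1 \<and> u=1 \<and> w=n"
    then show ?R using Q assms by linarith
  qed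
next
  assume ?R
  then show ?L
  proof
    assume "v = u+Suc k \<and> u+Suc k \<le> n"
    then have "((u+k = u+k \<and> u+k \<le> n) \<or> (k=1 \<and> u=1 \<and> u+k=n)) \<and> ((v = (u+k)+1 \<and> 1 \<le> u+k \<and> u+k \<le> n - 1) \<or> (u+k = 1 \<and> v = n))"
      using assms by linarith
    then show ?L by blast
  next
    assume "Suc k=1 \<and> u=1 \<and> v=n"
    then have "((1 = u+k \<and> u+k \<le> n) \<or> (k=1 \<and> u=1 \<and> 1=n)) \<and> ((v = 1+1 \<and> 1 \<le> (1::nat) \<and> 1 \<le> n - 1) \<or> (1 = (1::nat) \<and> v = n))"
      using assms by simp
    then show ?L by blast
  qed
qed

lemma pow_iff:
  assumes "n \<ge> 3" "1 \<le> u" "u \<le> n"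
  shows "(u,v) \<in> theta_arcs n ^^ k \<longleftrightarrow> (v = u+k \<and> u+k \<le> n) \<or> (k=1 \<and> u=1 \<and> v=n)"
proof (induction k arbitrary: v)
  case 0
  then show ?case using assms by auto
next
  case (Suc k)
  have "(u,v) \<in> theta_arcs n ^^ Suc k \<longleftrightarrow> (\<exists>w. (u,w) \<in> theta_arcs n ^^ k \<and> (w,v) \<in> theta_arcs n)"
    by (auto simp: relcomp_unfold)
  also have "\<dots> \<longleftrightarrow> (\<exists>w. ((w = u+k \<and> u+k \<le> n) \<or> (k=1 \<and> u=1 \<and> w=n)) \<and> ((v = w+1 \<and> 1 \<le> w \<and> w \<le> n - 1) \<or> (w = 1 \<and> v = n)))"
    by (simp only: Suc.IH arc_iff)
  also have "\<dots> \<longleftrightarrow> (v = u+Suc k \<and> u+Suc k \<le> n) \<or> (Suc k=1 \<and> u=1 \<and> v=n)"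
    by (rule step_arith[OF assms(1,2)])
  finally show ?case .
qed
lemma hd_iff:
  assumes "n \<ge> 3" "1 \<le> u" "u \<le> n" "1 \<le> v" "v \<le> n"
  shows "has_dist (theta_arcs n) u v k \<longleftrightarrow> (if u = 1 \<and> v = n then k = 1 else u \<le> v \<and> k = v - u)"
proof (cases "u = 1 \<and> v = n")
  case True
  then have "has_dist (theta_arcs n) u v k \<longleftrightarrow> ((n = 1+k \<and> 1+k \<le> n) \<or> k=1) \<and> (\<forall>j<k. \<not>((n = 1+j \<and> 1+j \<le> n) \<or> j=1))"
    unfolding has_dist_def pow_iff[OF assms(1-3)] by auto
  also have "\<dots> \<longleftrightarrow> k = 1" using assms(1) by (auto; presburger)
  finally show ?thesis using True by simp
next
  case False
  then have "has_dist (theta_arcs n) u v k \<longleftrightarrow> (v = u+k \<and> u+k \<le> n) \<and> (\<forall>j<k. \<not>(v = u+j \<and> u+j \<le> n))"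
    unfolding has_dist_def pow_iff[OF assms(1-3)] by auto
  also have "\<dots> \<longleftrightarrow> u \<le> v \<and> k = v - u" using assms by auto
  finally show ?thesis using if_not_P[OF False, of "k = 1" "u \<le> v \<and> k = v - u"] by simp
qed


lemma ND_ge2:
  assumes "n \<ge> 3" "2 \<le> u" "u \<le> n"
  shows "N_D {1..n} (theta_arcs n) D u = (\<lambda>d. u+d) ` {d\<in>D. d \<le> n-u}"
proof -
  have "\<And>y. 1 \<le> y \<Longrightarrow> y \<le> n \<Longrightarrow> has_dist (theta_arcs n) u y k \<longleftrightarrow> u \<le> y \<and> k = y - u" for k
    using hd_iff[OF assms(1) _ assms(3)] assms(2) by simp
  then show ?thesis unfolding N_D_def using assms
    by (intro set_eqI iffI) (auto simp: image_iff)
qed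

lemma ND_1:
  assumes "n \<ge> 3" "D \<subseteq> {0..n-2}"
  shows "(\<lambda>d. 1+d) ` D \<subseteq> N_D {1..n} (theta_arcs n) D 1"
proof
  fix y assume "y \<in> (\<lambda>d. 1+d) ` D"
  then obtain d where d: "d \<in> D" "y = 1+d" by auto
  with assms have y: "1 \<le> y" "y \<le> n" "y \<noteq> n" by auto
  have "has_dist (theta_arcs n) 1 y d"
    using hd_iff[OF assms(1) _ _ y(1,2), of 1 d] y d assms(1) by simp
  then show "y \<in> N_D {1..n} (theta_arcs n) D 1" unfolding N_D_def using y d by auto
qed

definition S :: "nat \<Rightarrow> nat set \<Rightarrow> nat \<Rightarrow> nat" where
  "S n D i = (\<Sum>d\<in>{d\<in>D. d \<le> n-i}. n+1-(i+d))"

lemma S_dec: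
  assumes "finite D" "1 \<le> i" "i < n" "d0 \<in> D" "d0 \<le> 1"
  shows "S n D (Suc i) < S n D i"
proof -
  let ?B = "{d\<in>D. d \<le> n - Suc i}" and ?C = "{d\<in>D. d \<le> n - i}"
  have fC: "finite ?C" using assms(1) by simp
  have BC: "?B \<subseteq> ?C" by auto
  show ?thesis
  proof (cases "?B = {}")
    case True
    have "S n D (Suc i) = (\<Sum>d\<in>?B. n+1-(Suc i+d))" unfolding S_def ..
    then have "S n D (Suc i) = 0" using True by simp
    moreover have "d0 \<in> ?C" using assms by auto
    moreover have "n+1-(i+d0) > 0" using assms by auto
    ultimately show ?thesis unfolding S_def
      using member_le_sum[OF \<open>d0 \<in> ?C\<close> _ fC, of "\<lambda>d. n+1-(i+d)"] by simp
  next
    case False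
    have "S n D (Suc i) = (\<Sum>d\<in>?B. n+1-(Suc i+d))" unfolding S_def ..
    also have "\<dots> < (\<Sum>d\<in>?B. n+1-(i+d))"
      by (rule sum_strict_mono) (use assms False in auto)
    also have "\<dots> \<le> (\<Sum>d\<in>?C. n+1-(i+d))"
      by (rule sum_mono2[OF fC BC]) simp
    finally show ?thesis unfolding S_def .
  qed
qed

lemma S_mono:
  assumes "finite D" "1 \<le> i" "i < j" "j \<le> n" "d0 \<in> D" "d0 \<le> 1"
  shows "S n D j < S n D i"
proof -
  have "Suc i \<le> j" using assms by simp
  then show ?thesis using assms(4)
  proof (induction j rule: dec_induct)
    case base then show ?case using S_dec[OF assms(1,2) _ assms(5,6)] by simp
  next
    case (step m)
    have m: "1 \<le> m" "m < n" using step.hyps(1) step.prems assms(2) by auto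
    have "S n D (Suc m) < S n D m" by (rule S_dec[OF assms(1) m assms(5,6)])
    moreover have "S n D m < S n D i" using step.IH step.prems by simp
    ultimately show ?case by simp
  qed
qed


theorem mainTheorem8:
  fixes n :: nat and D :: "nat set"
  assumes "n \<ge> 3"
    and "D \<subseteq> {0..n - 2}"
    and "is_distance_set (theta_vertices n) (theta_arcs n) D"
  shows "D_antimagic (theta_vertices n) (theta_arcs n) D \<longleftrightarrow> Min D \<le> 1"
proof -
  have V: "theta_vertices n = {1..n}" unfolding theta_vertices_def ..
  have fin: "finite D" using assms(2) finite_subset by blast
  have Dne: "D \<noteq> {}" using assms(3) unfolding is_distance_set_def by blast
  show ?thesis unfolding V
  proof
    assume "D_antimagic {1..n} (theta_arcs n) D"
    then obtain f where inj: "inj_on (D_weight {1..n} (theta_arcs n) D f) {1..n}"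
      unfolding D_antimagic_def D_antimagic_labeling_def by blast
    show "Min D \<le> 1"
    proof (rule ccontr)
      assume "\<not> Min D \<le> 1"
      then have big: "\<And>d. d \<in> D \<Longrightarrow> d \<ge> 2" using Min_le[OF fin] by fastforce
      have e1: "N_D {1..n} (theta_arcs n) D n = {}"
        using ND_ge2[OF assms(1), of n D] assms(1) big by fastforce
      have e2: "N_D {1..n} (theta_arcs n) D (n-1) = {}"
        using ND_ge2[OF assms(1), of "n-1" D] assms(1) big by fastforce
      have "D_weight {1..n} (theta_arcs n) D f n = D_weight {1..n} (theta_arcs n) D f (n-1)"
        unfolding D_weight_def e1 e2 by simp
      moreover have "n \<in> {1..n}" "n - 1 \<in> {1..n}" using assms(1) by auto
      ultimately have "n = n - 1" using inj unfolding inj_on_def by blast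
      then show False using assms(1) by simp
    qed
  next
    assume m: "Min D \<le> 1"
    define d0 where "d0 = Min D"
    have d0: "d0 \<in> D" "d0 \<le> 1" using Min_in[OF fin Dne] m unfolding d0_def by auto
    define f where "f = (\<lambda>x::nat. n + 1 - x)"
    define w where "w = D_weight {1..n} (theta_arcs n) D f"
    have bij: "bij_betw f {1..n} {1..n}"
      by (rule bij_betw_byWitness[where f'=f]) (auto simp: f_def)
    have w2: "w u = S n D u" if "2 \<le> u" "u \<le> n" for u
    proof -
      have "w u = (\<Sum>x\<in>(\<lambda>d. u+d) ` {d\<in>D. d \<le> n-u}. f x)"
        unfolding w_def D_weight_def ND_ge2[OF assms(1) that] ..
      also have "\<dots> = (\<Sum>d\<in>{d\<in>D. d \<le> n-u}. f (u+d))"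
        by (rule sum.reindex_cong[where l="\<lambda>d. u+d"]) (auto simp: inj_on_def)
      finally show ?thesis unfolding S_def f_def .
    qed
    have w1: "S n D 1 \<le> w 1"
    proof -
      have "S n D 1 = (\<Sum>d\<in>{d\<in>D. d \<le> n-1}. f (1+d))" unfolding S_def f_def ..
      also have "\<dots> = (\<Sum>x\<in>(\<lambda>d. 1+d) ` {d\<in>D. d \<le> n-1}. f x)"
        by (rule sym, rule sum.reindex_cong[where l="\<lambda>d. 1+d"]) (auto simp: inj_on_def)
      also have "\<dots> \<le> (\<Sum>x\<in>N_D {1..n} (theta_arcs n) D 1. f x)"
      proof (rule sum_mono2)
        show "finite (N_D {1..n} (theta_arcs n) D 1)" unfolding N_D_def by simp
        show "(\<lambda>d. 1+d) ` {d\<in>D. d \<le> n-1} \<subseteq> N_D {1..n} (theta_arcs n) D 1"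
          using ND_1[OF assms(1,2)] by blast
      qed simp
      finally show ?thesis unfolding w_def D_weight_def .
    qed
    have dec: "w b < w a" if "a \<in> {1..n}" "b \<in> {1..n}" "a < b" for a b
    proof -
      have wb: "w b = S n D b" using w2 that by auto
      have "S n D b < S n D a" using S_mono[OF fin _ that(3) _ d0] that by auto
      show ?thesis
      proof (cases "a = 1")
        case True then show ?thesis using wb w1 \<open>S n D b < S n D a\<close> by simp
      next
        case False then show ?thesis using wb w2[of a] that \<open>S n D b < S n D a\<close> by auto
      qed
    qed
    have inj: "inj_on w {1..n}"
    proof (rule inj_onI)
      fix a b assume ab: "a \<in> {1..n}" "b \<in> {1..n}" "w a = w b"
      show "a = b"
      proof (rule linorder_cases[of a b])
        assume "a < b" then show ?thesis using dec[of a b] ab by simp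
      next
        assume "b < a" then show ?thesis using dec[of b a] ab by simp
      qed
    qed
    have "card {1..n} = n" by simp
    then show "D_antimagic {1..n} (theta_arcs n) D"
      unfolding D_antimagic_def D_antimagic_labeling_def using bij inj unfolding w_def by auto
  qed
qed

end
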